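(* Let $(I,\preccurlyeq)$ be a directed set, let $S(\Lambda^{\preccurlyeq})$ be a direct spectrum over $(I,\preccurlyeq)$ with sets $\lambda_0(i)$, transports $\lambda^{\preccurlyeq}_{ij}$ and Bishop spaces $\mathcal F_i=(\lambda_0(i),F_i)$, let $S(M^{\preccurlyeq})$ be a direct spectrum over $(I,\preccurlyeq)$ with sets $\mu_0(i)$, transports $\mu^{\preccurlyeq}_{ij}$ and Bishop spaces $\mathcal G_i=(\mu_0(i),G_i)$, and let $\Psi:S(\Lambda^{\preccurlyeq})\Rightarrow S(M^{\preccurlyeq})$ be a direct spectrum-map. Then: (i) there is a unique function $\Psi_{\to}:\underset{\to}{\mathrm{Lim}}\,\lambda_0(i)\to\underset{\to}{\mathrm{Lim}}\,\mu_0(i)$ such that $\Psi_{\to}\circ\mathrm{eql}^{\Lambda^{\preccurlyeq}}_i=\mathrm{eql}^{M^{\preccurlyeq}}_i\circ\Psi_i$ for every $i\in I$; (ii) if $\Psi$ is continuous, then $\Psi_{\to}\in\mathrm{Mor}(\underset{\to}{\mathrm{Lim}}\,\mathcal F_i,\underset{\to}{\mathrm{Lim}}\,\mathcal G_i)$; (iii) if $\Psi_i$ is an embedding for every $i\in I$, then $\Psi_{\to}$ is an embedding.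
   Context: Work in Bishop-style constructive mathematics. Each set carries its own equality; functions respect equalities; $f$ is an embedding if $f(x)=f(x')$ implies $x=x'$. A directed set $(I,\preccurlyeq)$: a set with a reflexive transitive relation respecting equality, any two elements having a common upper bound. A direct family over $(I,\preccurlyeq)$: sets $\lambda_0(i)$ and functions $\lambda^{\preccurlyeq}_{ij}:\lambda_0(i)\to\lambda_0(j)$ for $i\preccurlyeq j$ with $\lambda^{\preccurlyeq}_{ii}=\mathrm{id}$ and $\lambda^{\preccurlyeq}_{ik}=\lambda^{\preccurlyeq}_{jk}\circ\lambda^{\preccurlyeq}_{ij}$. Bishop spaces: $\mathrm{Bic}(\mathbb R)$ = functions $\mathbb R\to\mathbb R$ uniformly continuous on each $[-n,n]$. A Bishop topology on $X$ is a set $F$ of functions $X\to\mathbb R$ containing constants, closed under addition, composition with $\mathrm{Bic}(\mathbb R)$, and uniform limits. $\bigvee F_0$ = least Bishop topology containing $F_0$. A Bishop morphism $(X,F)\to(Y,G)$ is a function $h$ with $g\circ h\in F$ for all $g\in G$; set $\mathrm{Mor}$. A direct spectrum: a direct family with Bishop topologies $F_i$ on $\lambda_0(i)$ such that each $\lambda^{\preccurlyeq}_{ij}\in\mathrm{Mor}(\mathcal F_i,\mathcal F_j)$. A direct spectrum-map $\Psi$ is a family of functions $\Psi_i:\lambda_0(i)\to\mu_0(i)$ with $\Psi_j\circ\lambda^{\preccurlyeq}_{ij}=\mu^{\preccurlyeq}_{ij}\circ\Psi_i$ for $i\preccurlyeq j$; it is continuous if each $\Psi_i\in\mathrm{Mor}(\mathcal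 F_i,\mathcal G_i)$. Direct limit: $\sum^{\preccurlyeq}\lambda_0(i)$ = pairs $(i,x)$, with $(i,x)=(j,y)$ iff there is $k\succcurlyeq i,j$ with $\lambda^{\preccurlyeq}_{ik}(x)=\lambda^{\preccurlyeq}_{jk}(y)$. $\prod^{\succcurlyeq}F_i$ = dependent assignments $\Theta$ with $\Theta_i\in F_i$ and $\Theta_i=\Theta_j\circ\lambda^{\preccurlyeq}_{ij}$ for $i\preccurlyeq j$. $\underset{\to}{\mathrm{Lim}}\,\lambda_0(i)$ has elements $\mathrm{eql}_0(i,x)$ with $\mathrm{eql}_0(i,x)=\mathrm{eql}_0(j,y)$ iff $(i,x)=(j,y)$ in $\sum^{\preccurlyeq}$; $\mathrm{eql}_0f_\Theta(\mathrm{eql}_0(i,x)):=\Theta_i(x)$; $\underset{\to}{\mathrm{Lim}}\,\mathcal F_i=(\underset{\to}{\mathrm{Lim}}\,\lambda_0(i),\bigvee\{\mathrm{eql}_0f_\Theta:\Theta\in\prod^{\succcurlyeq}F_i\})$; $\mathrm{eql}^{\Lambda^{\preccurlyeq}}_i(x)=\mathrm{eql}_0(i,x)$. The same constructions apply to $S(M^{\preccurlyeq})$. *)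

theory Defs
  imports "HOL-Analysis.Analysis"
begin

text \<open>Bishop-style sets are modelled as carrier sets with HOL equality; the direct limit
is modelled as the quotient of the disjoint union by its equality relation.
Real-valued functions on a carrier X are identified when they agree on X.\<close>

definition Bic :: "(real \<Rightarrow> real) set" where
  "Bic = {\<phi>. \<forall>n::nat. uniformly_continuous_on {- real n .. real n} \<phi>}"

definition bishop_topology :: "'a set \<Rightarrow> ('a \<Rightarrow> real) set \<Rightarrow> bool" where
  "bishop_topology X F \<longleftrightarrow>
     (\<forall>f g. f \<in> F \<longrightarrow> (\<forall>x\<in>X. g x = f x) \<longrightarrow> g \<in> F) \<and>
     (\<forall>c. (\<lambda>_. c) \<in> F) \<and>
     (\<forall>f\<in>F. \<forall>g\<in>F. (\<lambda>x. f x + g x) \<in> F) \<and>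
     (\<forall>f\<in>F. \<forall>\<phi>\<in>Bic. (\<phi> \<circ> f) \<in> F) \<and>
     (\<forall>f. (\<forall>\<epsilon>>0. \<exists>g\<in>F. \<forall>x\<in>X. \<bar>g x - f x\<bar> \<le> \<epsilon>) \<longrightarrow> f \<in> F)"

definition bigvee :: "'a set \<Rightarrow> ('a \<Rightarrow> real) set \<Rightarrow> ('a \<Rightarrow> real) set" where
  "bigvee X F0 = \<Inter>{F. bishop_topology X F \<and> F0 \<subseteq> F}"

definition Mor :: "'a set \<Rightarrow> ('a \<Rightarrow> real) set \<Rightarrow> 'b set \<Rightarrow> ('b \<Rightarrow> real) set \<Rightarrow> ('a \<Rightarrow> 'b) \<Rightarrow> bool" where
  "Mor X F Y G h \<longleftrightarrow> (\<forall>x\<in>X. h x \<in> Y) \<and> (\<forall>g\<in>G. g \<circ> h \<in> F)"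

definition directed_set :: "'i set \<Rightarrow> ('i \<Rightarrow> 'i \<Rightarrow> bool) \<Rightarrow> bool" where
  "directed_set I le \<longleftrightarrow>
     (\<forall>i\<in>I. le i i) \<and>
     (\<forall>i\<in>I. \<forall>j\<in>I. \<forall>k\<in>I. le i j \<longrightarrow> le j k \<longrightarrow> le i k) \<and>
     (\<forall>i\<in>I. \<forall>j\<in>I. \<exists>k\<in>I. le i k \<and> le j k)"

definition direct_family ::
  "'i set \<Rightarrow> ('i \<Rightarrow> 'i \<Rightarrow> bool) \<Rightarrow> ('i \<Rightarrow> 'a set) \<Rightarrow> ('i \<Rightarrow> 'i \<Rightarrow> 'a \<Rightarrow> 'a) \<Rightarrow> bool" where
  "direct_family I le A lam \<longleftrightarrow>
     (\<forall>i\<in>I. \<forall>j\<in>I. le i j \<longrightarrow> (\<forall>x\<in>A i. lam i j x \<in> A j)) \<and>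
     (\<forall>i\<in>I. \<forall>x\<in>A i. lam i i x = x) \<and>
     (\<forall>i\<in>I. \<forall>j\<in>I. \<forall>k\<in>I. le i j \<longrightarrow> le j k \<longrightarrow>
        (\<forall>x\<in>A i. lam i k x = lam j k (lam i j x)))"

definition direct_spectrum ::
  "'i set \<Rightarrow> ('i \<Rightarrow> 'i \<Rightarrow> bool) \<Rightarrow> ('i \<Rightarrow> 'a set) \<Rightarrow> ('i \<Rightarrow> 'i \<Rightarrow> 'a \<Rightarrow> 'a)
    \<Rightarrow> ('i \<Rightarrow> ('a \<Rightarrow> real) set) \<Rightarrow> bool" where
  "direct_spectrum I le A lam F \<longleftrightarrow>
     direct_family I le A lam \<and>
     (\<forall>i\<in>I. bishop_topology (A i) (F i)) \<and>
     (\<forall>i\<in>I. \<forall>j\<in>I. le i j \<longrightarrow> Mor (A i) (F i) (A j) (F j) (lam i j))"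

definition direct_spectrum_map ::
  "'i set \<Rightarrow> ('i \<Rightarrow> 'i \<Rightarrow> bool) \<Rightarrow> ('i \<Rightarrow> 'a set) \<Rightarrow> ('i \<Rightarrow> 'i \<Rightarrow> 'a \<Rightarrow> 'a)
    \<Rightarrow> ('i \<Rightarrow> 'b set) \<Rightarrow> ('i \<Rightarrow> 'i \<Rightarrow> 'b \<Rightarrow> 'b) \<Rightarrow> ('i \<Rightarrow> 'a \<Rightarrow> 'b) \<Rightarrow> bool" where
  "direct_spectrum_map I le A lam B mu Psi \<longleftrightarrow>
     (\<forall>i\<in>I. \<forall>x\<in>A i. Psi i x \<in> B i) \<and>
     (\<forall>i\<in>I. \<forall>j\<in>I. le i j \<longrightarrow> (\<forall>x\<in>A i. Psi j (lam i j x) = mu i j (Psi i x)))"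

definition continuous_spectrum_map ::
  "'i set \<Rightarrow> ('i \<Rightarrow> 'a set) \<Rightarrow> ('i \<Rightarrow> ('a \<Rightarrow> real) set)
    \<Rightarrow> ('i \<Rightarrow> 'b set) \<Rightarrow> ('i \<Rightarrow> ('b \<Rightarrow> real) set) \<Rightarrow> ('i \<Rightarrow> 'a \<Rightarrow> 'b) \<Rightarrow> bool" where
  "continuous_spectrum_map I A F B G Psi \<longleftrightarrow> (\<forall>i\<in>I. Mor (A i) (F i) (B i) (G i) (Psi i))"

definition dsum_eq ::
  "'i set \<Rightarrow> ('i \<Rightarrow> 'i \<Rightarrow> bool) \<Rightarrow> ('i \<Rightarrow> 'a set) \<Rightarrow> ('i \<Rightarrow> 'i \<Rightarrow> 'a \<Rightarrow> 'a) \<Rightarrow> (('i \<times> 'a) \<times> ('i \<times> 'a)) set" where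
  "dsum_eq I le A lam = {((i,x),(j,y)). i \<in> I \<and> x \<in> A i \<and> j \<in> I \<and> y \<in> A j \<and>
      (\<exists>k\<in>I. le i k \<and> le j k \<and> lam i k x = lam j k y)}"

definition dLim ::
  "'i set \<Rightarrow> ('i \<Rightarrow> 'i \<Rightarrow> bool) \<Rightarrow> ('i \<Rightarrow> 'a set) \<Rightarrow> ('i \<Rightarrow> 'i \<Rightarrow> 'a \<Rightarrow> 'a) \<Rightarrow> ('i \<times> 'a) set set" where
  "dLim I le A lam = (SIGMA i:I. A i) // dsum_eq I le A lam"

definition eql ::
  "'i set \<Rightarrow> ('i \<Rightarrow> 'i \<Rightarrow> bool) \<Rightarrow> ('i \<Rightarrow> 'a set) \<Rightarrow> ('i \<Rightarrow> 'i \<Rightarrow> 'a \<Rightarrow> 'a) \<Rightarrow> 'i \<Rightarrow> 'a \<Rightarrow> ('i \<times> 'a) set" where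
  "eql I le A lam i x = dsum_eq I le A lam `` {(i, x)}"

definition dprod ::
  "'i set \<Rightarrow> ('i \<Rightarrow> 'i \<Rightarrow> bool) \<Rightarrow> ('i \<Rightarrow> 'a set) \<Rightarrow> ('i \<Rightarrow> 'i \<Rightarrow> 'a \<Rightarrow> 'a)
     \<Rightarrow> ('i \<Rightarrow> ('a \<Rightarrow> real) set) \<Rightarrow> ('i \<Rightarrow> 'a \<Rightarrow> real) set" where
  "dprod I le A lam F = {\<Theta>. (\<forall>i\<in>I. \<Theta> i \<in> F i) \<and>
      (\<forall>i\<in>I. \<forall>j\<in>I. le i j \<longrightarrow> (\<forall>x\<in>A i. \<Theta> i x = \<Theta> j (lam i j x)))}"

definition eqlf :: "('i \<Rightarrow> 'a \<Rightarrow> real) \<Rightarrow> ('i \<times> 'a) set \<Rightarrow> real" where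
  "eqlf \<Theta> c = the_elem ((\<lambda>(i, x). \<Theta> i x) ` c)"

definition LimTop ::
  "'i set \<Rightarrow> ('i \<Rightarrow> 'i \<Rightarrow> bool) \<Rightarrow> ('i \<Rightarrow> 'a set) \<Rightarrow> ('i \<Rightarrow> 'i \<Rightarrow> 'a \<Rightarrow> 'a)
     \<Rightarrow> ('i \<Rightarrow> ('a \<Rightarrow> real) set) \<Rightarrow> (('i \<times> 'a) set \<Rightarrow> real) set" where
  "LimTop I le A lam F = bigvee (dLim I le A lam) (eqlf ` dprod I le A lam F)"

end

theory Submission
  imports Defs
begin

lemma dsum_equiv:
  assumes D: "directed_set I le" and F: "direct_family I le A lam"
  shows "equiv (SIGMA i:I. A i) (dsum_eq I le A lam)"
proof (rule equivI)
  show "dsum_eq I le A lam \<subseteq> (SIGMA i:I. A i) \<times> (SIGMA i:I. A i)"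
    unfolding dsum_eq_def by auto
  have rf: "\<And>i. i \<in> I \<Longrightarrow> le i i" using D unfolding directed_set_def by blast
  show "refl_on (SIGMA i:I. A i) (dsum_eq I le A lam)"
    unfolding refl_on_def dsum_eq_def using rf by auto
  show "sym (dsum_eq I le A lam)"
    unfolding sym_def dsum_eq_def by auto
  show "trans (dsum_eq I le A lam)"
  proof (rule transI)
    fix p q r assume pq: "(p, q) \<in> dsum_eq I le A lam" and qr: "(q, r) \<in> dsum_eq I le A lam"
    obtain i x j y l z where e: "p = (i,x)" "q = (j,y)" "r = (l,z)" by (cases p, cases q, cases r) auto
    from pq obtain k1 where k1: "i\<in>I" "x\<in>A i" "j\<in>I" "y\<in>A j" "k1\<in>I" "le i k1" "le j k1"
      "lam i k1 x = lam j k1 y" unfolding e dsum_eq_def by auto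
    from qr obtain k2 where k2: "l\<in>I" "z\<in>A l" "k2\<in>I" "le j k2" "le l k2"
      "lam j k2 y = lam l k2 z" unfolding e dsum_eq_def by auto
    from D k1 k2 obtain k where k: "k\<in>I" "le k1 k" "le k2 k" unfolding directed_set_def by blast
    have tr: "\<And>a b c. a\<in>I \<Longrightarrow> b\<in>I \<Longrightarrow> c\<in>I \<Longrightarrow> le a b \<Longrightarrow> le b c \<Longrightarrow> le a c"
      using D unfolding directed_set_def by blast
    have co: "\<And>a b c w. a\<in>I \<Longrightarrow> b\<in>I \<Longrightarrow> c\<in>I \<Longrightarrow> le a b \<Longrightarrow> le b c \<Longrightarrow> w \<in> A a \<Longrightarrow>
       lam a c w = lam b c (lam a b w)"
      using F unfolding direct_family_def by blast
    have "lam i k x = lam k1 k (lam i k1 x)" using co[of i k1 k x] k k1 by simp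
    also have "\<dots> = lam k1 k (lam j k1 y)" using k1 by simp
    also have "\<dots> = lam j k y" using co[of j k1 k y] k k1 by simp
    also have "\<dots> = lam k2 k (lam j k2 y)" using co[of j k2 k y] k k2 k1 by simp
    also have "\<dots> = lam k2 k (lam l k2 z)" using k2 by simp
    also have "\<dots> = lam l k z" using co[of l k2 k z] k k2 by simp
    finally have "lam i k x = lam l k z" .
    moreover have "le i k" "le l k" using tr k k1 k2 by blast+
    ultimately show "(p, r) \<in> dsum_eq I le A lam"
      unfolding e dsum_eq_def using k k1 k2 by auto
  qed
qed

lemma eql_eq_iff:
  assumes "directed_set I le" "direct_family I le A lam"
    "i\<in>I" "x\<in>A i" "j\<in>I" "y\<in>A j"
  shows "eql I le A lam i x = eql I le A lam j y \<longleftrightarrow> ((i,x),(j,y)) \<in> dsum_eq I le A lam"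
  unfolding eql_def
  using equiv_class_eq_iff[OF dsum_equiv[OF assms(1,2)]] assms by auto

lemma dLim_cases:
  "c \<in> dLim I le A lam \<Longrightarrow> \<exists>i\<in>I. \<exists>x\<in>A i. c = eql I le A lam i x"
  unfolding dLim_def eql_def quotient_def by auto

lemma eql_in: "i\<in>I \<Longrightarrow> x\<in>A i \<Longrightarrow> eql I le A lam i x \<in> dLim I le A lam"
  unfolding dLim_def eql_def by (rule quotientI) auto

lemma mem_eql: "p \<in> eql I le A lam i x \<longleftrightarrow> ((i,x),p) \<in> dsum_eq I le A lam"
  unfolding eql_def by auto

lemma eqlf_eql:
  assumes D: "directed_set I le" and Fm: "direct_family I le A lam"
    and T: "\<forall>i\<in>I. \<forall>j\<in>I. le i j \<longrightarrow> (\<forall>x\<in>A i. \<Theta> i x = \<Theta> j (lam i j x))"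
    and i: "i\<in>I" "x\<in>A i"
  shows "eqlf \<Theta> (eql I le A lam i x) = \<Theta> i x"
proof -
  have "(\<lambda>(j, y). \<Theta> j y) ` eql I le A lam i x = {\<Theta> i x}"
  proof
    show "(\<lambda>(j, y). \<Theta> j y) ` eql I le A lam i x \<subseteq> {\<Theta> i x}"
    proof clarify
      fix j y assume "(j,y) \<in> eql I le A lam i x"
      then obtain k where k: "j\<in>I" "y\<in>A j" "k\<in>I" "le i k" "le j k" "lam i k x = lam j k y"
        unfolding mem_eql dsum_eq_def by auto
      have "\<Theta> i x = \<Theta> k (lam i k x)" using T i k by blast
      also have "\<dots> = \<Theta> k (lam j k y)" using k by simp
      also have "\<dots> = \<Theta> j y" using T k by auto
      finally show "\<Theta> j y = \<Theta> i x" by simp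
    qed
    have "(i,x) \<in> eql I le A lam i x"
      using dsum_equiv[OF D Fm] i unfolding mem_eql equiv_def refl_on_def by auto
    then show "{\<Theta> i x} \<subseteq> (\<lambda>(j, y). \<Theta> j y) ` eql I le A lam i x" by force
  qed
  then show ?thesis unfolding eqlf_def by simp
qed

lemma bt_ext: "bishop_topology X F \<Longrightarrow> f \<in> F \<Longrightarrow> \<forall>x\<in>X. g x = f x \<Longrightarrow> g \<in> F"
  unfolding bishop_topology_def by (drule conjunct1) blast
lemma bt_const: "bishop_topology X F \<Longrightarrow> (\<lambda>_. c) \<in> F"
  unfolding bishop_topology_def by (drule conjunct2, drule conjunct1) blast
lemma bt_add: "bishop_topology X F \<Longrightarrow> f \<in> F \<Longrightarrow> g \<in> F \<Longrightarrow> (\<lambda>x. f x + g x) \<in> F"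
  unfolding bishop_topology_def by (drule conjunct2, drule conjunct2, drule conjunct1) blast
lemma bt_comp: "bishop_topology X F \<Longrightarrow> f \<in> F \<Longrightarrow> \<phi> \<in> Bic \<Longrightarrow> \<phi> \<circ> f \<in> F"
  unfolding bishop_topology_def by (drule conjunct2, drule conjunct2, drule conjunct2, drule conjunct1) blast
lemma bt_lim: "bishop_topology X F \<Longrightarrow> (\<forall>\<epsilon>>0. \<exists>g\<in>F. \<forall>x\<in>X. \<bar>g x - f x\<bar> \<le> \<epsilon>) \<Longrightarrow> f \<in> F"
  unfolding bishop_topology_def by (drule conjunct2, drule conjunct2, drule conjunct2, drule conjunct2) blast
lemma bt_intro:
  assumes "\<And>f g. f \<in> F \<Longrightarrow> \<forall>x\<in>X. g x = f x \<Longrightarrow> g \<in> F"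
    "\<And>c. (\<lambda>_. c) \<in> F" "\<And>f g. f \<in> F \<Longrightarrow> g \<in> F \<Longrightarrow> (\<lambda>x. f x + g x) \<in> F"
    "\<And>f \<phi>. f \<in> F \<Longrightarrow> \<phi> \<in> Bic \<Longrightarrow> \<phi> \<circ> f \<in> F"
    "\<And>f. (\<forall>\<epsilon>>0. \<exists>g\<in>F. \<forall>x\<in>X. \<bar>g x - f x\<bar> \<le> \<epsilon>) \<Longrightarrow> f \<in> F"
  shows "bishop_topology X F"
  unfolding bishop_topology_def using assms by blast
lemma bigvee_bt: "bishop_topology X (bigvee X F0)"
proof (rule bt_intro)
  let ?S = "{F. bishop_topology X F \<and> F0 \<subseteq> F}"
  have V: "bigvee X F0 = \<Inter>?S" unfolding bigvee_def ..
  show "g \<in> bigvee X F0" if "f \<in> bigvee X F0" "\<forall>x\<in>X. g x = f x" for f g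
    using that bt_ext unfolding V by blast
  show "(\<lambda>_. c) \<in> bigvee X F0" for c using bt_const unfolding V by blast
  show "(\<lambda>x. f x + g x) \<in> bigvee X F0" if "f \<in> bigvee X F0" "g \<in> bigvee X F0" for f g
    using that bt_add unfolding V by blast
  show "\<phi> \<circ> f \<in> bigvee X F0" if "f \<in> bigvee X F0" "\<phi> \<in> Bic" for f \<phi>
    using that bt_comp unfolding V by blast
  show "f \<in> bigvee X F0" if h: "\<forall>\<epsilon>>0. \<exists>g\<in>bigvee X F0. \<forall>x\<in>X. \<bar>g x - f x\<bar> \<le> \<epsilon>" for f
    unfolding V
  proof
    fix F assume F: "F \<in> ?S"
    have "\<forall>\<epsilon>>0. \<exists>g\<in>F. \<forall>x\<in>X. \<bar>g x - f x\<bar> \<le> \<epsilon>"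
      using h F unfolding V by blast
    then show "f \<in> F" using F bt_lim by blast
  qed
qed

lemma bigvee_least: "bishop_topology X H \<Longrightarrow> F0 \<subseteq> H \<Longrightarrow> bigvee X F0 \<subseteq> H"
  unfolding bigvee_def by blast

lemma bigvee_gen: "F0 \<subseteq> bigvee X F0"
  unfolding bigvee_def by blast

theorem theorem9p8:
  fixes I :: "'i set" and le :: "'i \<Rightarrow> 'i \<Rightarrow> bool"
    and A :: "'i \<Rightarrow> 'a set" and lam :: "'i \<Rightarrow> 'i \<Rightarrow> 'a \<Rightarrow> 'a" and F :: "'i \<Rightarrow> ('a \<Rightarrow> real) set"
    and B :: "'i \<Rightarrow> 'b set" and mu :: "'i \<Rightarrow> 'i \<Rightarrow> 'b \<Rightarrow> 'b" and G :: "'i \<Rightarrow> ('b \<Rightarrow> real) set"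
    and Psi :: "'i \<Rightarrow> 'a \<Rightarrow> 'b"
  assumes "directed_set I le"
    and "direct_spectrum I le A lam F"
    and "direct_spectrum I le B mu G"
    and "direct_spectrum_map I le A lam B mu Psi"
  shows "\<exists>f. (\<forall>c\<in>dLim I le A lam. f c \<in> dLim I le B mu)
           \<and> (\<forall>i\<in>I. \<forall>x\<in>A i. f (eql I le A lam i x) = eql I le B mu i (Psi i x))
           \<and> (\<forall>g. (\<forall>c\<in>dLim I le A lam. g c \<in> dLim I le B mu)
                  \<and> (\<forall>i\<in>I. \<forall>x\<in>A i. g (eql I le A lam i x) = eql I le B mu i (Psi i x))
                  \<longrightarrow> (\<forall>c\<in>dLim I le A lam. g c = f c))
           \<and> (continuous_spectrum_map I A F B G Psi \<longrightarrow>
                Mor (dLim I le A lam) (LimTop I le A lam F) (dLim I le B mu) (LimTop I le B mu G) f)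
           \<and> ((\<forall>i\<in>I. inj_on (Psi i) (A i)) \<longrightarrow> inj_on f (dLim I le A lam))"
proof -
  note D = assms(1)
  have FA: "direct_family I le A lam" using assms(2) unfolding direct_spectrum_def by blast
  have FB: "direct_family I le B mu" using assms(3) unfolding direct_spectrum_def by blast
  have PB: "\<And>i x. i\<in>I \<Longrightarrow> x\<in>A i \<Longrightarrow> Psi i x \<in> B i"
    using assms(4) unfolding direct_spectrum_map_def by blast
  have Pc: "\<And>i j x. i\<in>I \<Longrightarrow> j\<in>I \<Longrightarrow> le i j \<Longrightarrow> x\<in>A i \<Longrightarrow> Psi j (lam i j x) = mu i j (Psi i x)"
    using assms(4) unfolding direct_spectrum_map_def by blast
  have lamA: "\<And>i j x. i\<in>I \<Longrightarrow> j\<in>I \<Longrightarrow> le i j \<Longrightarrow> x\<in>A i \<Longrightarrow> lam i j x \<in> A j"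
    using FA unfolding direct_family_def by blast
  let ?EA = "eql I le A lam" and ?EB = "eql I le B mu"
  define f where "f c = (\<Union>p\<in>c. ?EB (fst p) (Psi (fst p) (snd p)))" for c
  have feql: "f (?EA i x) = ?EB i (Psi i x)" if i: "i\<in>I" "x\<in>A i" for i x
  proof -
    have "?EB (fst p) (Psi (fst p) (snd p)) = ?EB i (Psi i x)" if p: "p \<in> ?EA i x" for p
    proof -
      obtain j y where pe: "p = (j,y)" by (cases p)
      from p obtain k where k: "j\<in>I" "y\<in>A j" "k\<in>I" "le i k" "le j k" "lam i k x = lam j k y"
        unfolding pe mem_eql dsum_eq_def by auto
      have "mu i k (Psi i x) = Psi k (lam i k x)" using Pc[of i k x] i k by simp
      also have "\<dots> = Psi k (lam j k y)" using k by simp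
      also have "\<dots> = mu j k (Psi j y)" using Pc[of j k y] k by simp
      finally have "mu i k (Psi i x) = mu j k (Psi j y)" .
      then have "((j, Psi j y), (i, Psi i x)) \<in> dsum_eq I le B mu"
        unfolding dsum_eq_def using i k PB by auto
      then show ?thesis unfolding pe using eql_eq_iff[OF D FB, of j "Psi j y" i "Psi i x"] i k PB by simp
    qed
    moreover have "(i,x) \<in> ?EA i x"
      using dsum_equiv[OF D FA] i unfolding mem_eql equiv_def refl_on_def by auto
    ultimately show ?thesis unfolding f_def by auto
  qed
  have fin: "\<forall>c\<in>dLim I le A lam. f c \<in> dLim I le B mu"
  proof
    fix c assume "c \<in> dLim I le A lam"
    then obtain i x where ix: "i\<in>I" "x\<in>A i" "c = ?EA i x" using dLim_cases by blast
    show "f c \<in> dLim I le B mu" using ix feql[OF ix(1,2)] eql_in[of i I "Psi i x" B le mu, OF ix(1) PB[OF ix(1,2)]] by simp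
  qed
  show ?thesis
  proof (intro exI[of _ f] conjI impI)
    show "\<forall>c\<in>dLim I le A lam. f c \<in> dLim I le B mu" by (fact fin)
    show "\<forall>i\<in>I. \<forall>x\<in>A i. f (?EA i x) = ?EB i (Psi i x)" using feql by blast
    show "\<forall>g. (\<forall>c\<in>dLim I le A lam. g c \<in> dLim I le B mu)
                  \<and> (\<forall>i\<in>I. \<forall>x\<in>A i. g (?EA i x) = ?EB i (Psi i x))
                  \<longrightarrow> (\<forall>c\<in>dLim I le A lam. g c = f c)"
    proof (intro allI impI ballI)
      fix g c assume g: "(\<forall>c\<in>dLim I le A lam. g c \<in> dLim I le B mu)
                  \<and> (\<forall>i\<in>I. \<forall>x\<in>A i. g (?EA i x) = ?EB i (Psi i x))"
        and c: "c \<in> dLim I le A lam"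
      then obtain i x where ix: "i\<in>I" "x\<in>A i" "c = ?EA i x" using dLim_cases by blast
      show "g c = f c" using ix g feql by simp
    qed
  next
    assume inj: "\<forall>i\<in>I. inj_on (Psi i) (A i)"
    show "inj_on f (dLim I le A lam)"
    proof (rule inj_onI)
      fix c d assume c: "c \<in> dLim I le A lam" and d: "d \<in> dLim I le A lam" and e: "f c = f d"
      from dLim_cases[OF c] obtain i x where ix: "i\<in>I" "x\<in>A i" "c = ?EA i x" by blast
      from dLim_cases[OF d] obtain j y where jy: "j\<in>I" "y\<in>A j" "d = ?EA j y" by blast
      from e have "?EB i (Psi i x) = ?EB j (Psi j y)" using feql ix jy by simp
      then obtain k where k: "k\<in>I" "le i k" "le j k" "mu i k (Psi i x) = mu j k (Psi j y)"
        using eql_eq_iff[OF D FB] ix jy PB unfolding dsum_eq_def by auto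
      then have "Psi k (lam i k x) = Psi k (lam j k y)" using Pc[of i k x] Pc[of j k y] ix jy by simp
      moreover have "lam i k x \<in> A k" "lam j k y \<in> A k" using lamA ix jy k by auto
      ultimately have "lam i k x = lam j k y"
        using inj k(1) unfolding inj_on_def by blast
      then have "((i,x),(j,y)) \<in> dsum_eq I le A lam" unfolding dsum_eq_def using ix jy k by auto
      then show "c = d" using eql_eq_iff[OF D FA] ix jy by simp
    qed
  next
    assume cont: "continuous_spectrum_map I A F B G Psi"
    have PM: "\<And>i. i\<in>I \<Longrightarrow> Mor (A i) (F i) (B i) (G i) (Psi i)"
      using cont unfolding continuous_spectrum_map_def by blast
    let ?L = "LimTop I le A lam F"
    have btL: "bishop_topology (dLim I le A lam) ?L"
      unfolding LimTop_def by (rule bigvee_bt)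
    have L1: "\<And>g h. g \<in> ?L \<Longrightarrow> (\<forall>x\<in>dLim I le A lam. h x = g x) \<Longrightarrow> h \<in> ?L"
      using bt_ext[OF btL] by blast
    have L2: "\<And>c. (\<lambda>_. c) \<in> ?L"
      using bt_const[OF btL] by blast
    have L3: "\<And>g h. g \<in> ?L \<Longrightarrow> h \<in> ?L \<Longrightarrow> (\<lambda>x. g x + h x) \<in> ?L"
      using bt_add[OF btL] by blast
    have L4: "\<And>g \<phi>. g \<in> ?L \<Longrightarrow> \<phi> \<in> Bic \<Longrightarrow> \<phi> \<circ> g \<in> ?L"
      using bt_comp[OF btL] by blast
    have L5: "\<And>h. (\<forall>\<epsilon>>0. \<exists>g\<in>?L. \<forall>x\<in>dLim I le A lam. \<bar>g x - h x\<bar> \<le> \<epsilon>) \<Longrightarrow> h \<in> ?L"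
      using bt_lim[OF btL] by blast
    define H where "H = {g. g \<circ> f \<in> ?L}"
    have btH: "bishop_topology (dLim I le B mu) H"
      unfolding bishop_topology_def
    proof (intro conjI allI ballI impI)
      fix g h assume g: "g \<in> H" and agr: "\<forall>x\<in>dLim I le B mu. h x = g x"
      have "\<forall>x\<in>dLim I le A lam. (h \<circ> f) x = (g \<circ> f) x" using agr fin by simp
      then show "h \<in> H" using g L1[of "g \<circ> f" "h \<circ> f"] unfolding H_def by simp
    next
      fix c :: real
      show "(\<lambda>_. c) \<in> H" using L2 unfolding H_def by (simp add: o_def)
    next
      fix g h assume "g \<in> H" "h \<in> H"
      then show "(\<lambda>x. g x + h x) \<in> H" using L3[of "g \<circ> f" "h \<circ> f"] unfolding H_def
        by (simp add: o_def)
    next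
      fix g \<phi> assume "g \<in> H" "\<phi> \<in> Bic"
      then show "\<phi> \<circ> g \<in> H" using L4[of "g \<circ> f" \<phi>] unfolding H_def
        by (simp add: o_assoc)
    next
      fix h assume ul: "\<forall>\<epsilon>>0. \<exists>g\<in>H. \<forall>x\<in>dLim I le B mu. \<bar>g x - h x\<bar> \<le> \<epsilon>"
      have "\<forall>\<epsilon>>0. \<exists>g\<in>?L. \<forall>x\<in>dLim I le A lam. \<bar>g x - (h \<circ> f) x\<bar> \<le> \<epsilon>"
      proof (intro allI impI)
        fix \<epsilon> :: real assume "\<epsilon> > 0"
        then obtain g where "g \<in> H" "\<forall>x\<in>dLim I le B mu. \<bar>g x - h x\<bar> \<le> \<epsilon>" using ul by blast
        then show "\<exists>g\<in>?L. \<forall>x\<in>dLim I le A lam. \<bar>g x - (h \<circ> f) x\<bar> \<le> \<epsilon>"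
          using fin unfolding H_def by (intro bexI[of _ "g \<circ> f"]) auto
      qed
      then show "h \<in> H" using L5[of "h \<circ> f"] unfolding H_def by simp
    qed
    have gen: "eqlf ` dprod I le B mu G \<subseteq> H"
    proof
      fix t assume "t \<in> eqlf ` dprod I le B mu G"
      then obtain \<Theta> where T: "\<Theta> \<in> dprod I le B mu G" and t: "t = eqlf \<Theta>" by blast
      define \<Theta>' where "\<Theta>' = (\<lambda>i. \<Theta> i \<circ> Psi i)"
      have TG: "\<forall>i\<in>I. \<Theta> i \<in> G i" and Tc: "\<forall>i\<in>I. \<forall>j\<in>I. le i j \<longrightarrow> (\<forall>x\<in>B i. \<Theta> i x = \<Theta> j (mu i j x))"
        using T unfolding dprod_def by auto
      have Tc': "\<forall>i\<in>I. \<forall>j\<in>I. le i j \<longrightarrow> (\<forall>x\<in>A i. \<Theta>' i x = \<Theta>' j (lam i j x))"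
        unfolding \<Theta>'_def using Tc Pc PB by simp
      have "\<Theta>' \<in> dprod I le A lam F"
        unfolding dprod_def using Tc' TG PM unfolding \<Theta>'_def Mor_def by auto
      then have inL: "eqlf \<Theta>' \<in> ?L" unfolding LimTop_def using bigvee_gen by blast
      have "\<forall>c\<in>dLim I le A lam. (t \<circ> f) c = eqlf \<Theta>' c"
      proof
        fix c assume "c \<in> dLim I le A lam"
        then obtain i x where ix: "i\<in>I" "x\<in>A i" "c = ?EA i x" using dLim_cases by blast
        have "(t \<circ> f) c = \<Theta> i (Psi i x)"
          using feql[OF ix(1,2)] eqlf_eql[OF D FB Tc ix(1) PB[OF ix(1,2)]] ix t by simp
        also have "\<dots> = eqlf \<Theta>' c" using eqlf_eql[OF D FA Tc' ix(1,2)] ix \<Theta>'_def by (simp add: o_def)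
        finally show "(t \<circ> f) c = eqlf \<Theta>' c" .
      qed
      then show "t \<in> H" using L1[OF inL, of "t \<circ> f"] unfolding H_def by simp
    qed
    have "LimTop I le B mu G \<subseteq> H"
      unfolding LimTop_def by (rule bigvee_least[OF btH gen])
    then show "Mor (dLim I le A lam) ?L (dLim I le B mu) (LimTop I le B mu G) f"
      unfolding Mor_def H_def using fin by blast
  qed
qed

end
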